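(* For every integer $i\ge1$, as $n\to\infty$, in probability, $$\frac{\#\{w\in W_n:\ s_n(w)=i\}}{nk}\to x_i:=(1+\alpha)\Gamma(2+\alpha)\frac{\Gamma(i)}{\Gamma(2+\alpha+i)} ,$$ where $\alpha=k/\lambda$.
   Context: Preferred attachment affiliation model. Fix a real $\lambda>0$, an integer $k\ge 1$ and an integer $l\ge 0$ with $\lambda\le k+l$. At time $0$ a library contains books $w_1,\dots,w_l$, each with score $1$. For $n=0,1,2,\dots$, step $n+1$ proceeds as follows: $k$ new books $w_{l+nk+1},\dots,w_{l+(n+1)k}$ arrive, each with score $1$; then a customer $v_{n+1}$ arrives and, conditionally on the past and independently over books, downloads each book $w\in W_{n+1}=\{w_1,\dots,w_{l+(n+1)k}\}$ with probability $p_{n+1,s(w)}=\lambda s(w)/(l+(n+1)k+n\lambda)$, where $s(w)$ is the current score of $w$. Every book downloaded by $v_{n+1}$ then has its score increased by $1$. $W_n=\{w_1,\dots,w_{l+nk}\}$ and $s_n(w)$ denotes the score of $w$ after step $n$. *)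

theory Defs
  imports "HOL-Probability.Probability"
begin

fun seq_pmf :: "'a pmf list \<Rightarrow> 'a list pmf" where
  "seq_pmf [] = return_pmf []"
| "seq_pmf (p # ps) = bind_pmf p (\<lambda>x. map_pmf (\<lambda>xs. x # xs) (seq_pmf ps))"

text \<open>A state after step n is the list of scores of books w_1, ..., w_(l+nk), in order.\<close>
definition paa_step :: "real \<Rightarrow> nat \<Rightarrow> nat \<Rightarrow> nat \<Rightarrow> nat list \<Rightarrow> nat list pmf" where
  "paa_step lam k l n s =
     (let s' = s @ replicate k 1;
          D = real (l + (n + 1) * k) + real n * lam
      in seq_pmf (map (\<lambda>sc. map_pmf (\<lambda>b. if b then sc + 1 else sc)
                                      (bernoulli_pmf (lam * real sc / D))) s'))"

primrec paa_state :: "real \<Rightarrow> nat \<Rightarrow> nat \<Rightarrow> nat \<Rightarrow> nat list pmf" where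
  "paa_state lam k l 0 = return_pmf (replicate l 1)"
| "paa_state lam k l (Suc n) = bind_pmf (paa_state lam k l n) (paa_step lam k l n)"

definition num_score :: "nat \<Rightarrow> nat list \<Rightarrow> nat" where
  "num_score i s = length (filter (\<lambda>sc. sc = i) s)"

definition paa_limit :: "real \<Rightarrow> nat \<Rightarrow> nat \<Rightarrow> real" where
  "paa_limit lam k i =
     (let \<alpha> = real k / lam
      in (1 + \<alpha>) * Gamma (2 + \<alpha>) * Gamma (real i) / Gamma (2 + \<alpha> + real i))"

end

theory Submission
  imports Defs
begin


abbreviation E :: "'a pmf \<Rightarrow> ('a \<Rightarrow> real) \<Rightarrow> real" where
  "E M f \<equiv> measure_pmf.expectation M f"

lemma E_bind:
  assumes "finite (set_pmf M)" "\<And>x. x \<in> set_pmf M \<Longrightarrow> finite (set_pmf (N x))"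
  shows "E (bind_pmf M N) h = E M (\<lambda>x. E (N x) h)"
proof -
  have "E (bind_pmf M N) h = (\<Sum>a\<in>set_pmf M. pmf M a *\<^sub>R E (N a) h)"
    by (rule pmf_expectation_bind) (use assms in auto)
  also have "\<dots> = E M (\<lambda>x. E (N x) h)"
    by (rule integral_measure_pmf[symmetric]) (use assms in auto)
  finally show ?thesis .
qed

lemma E_add: "finite (set_pmf M) \<Longrightarrow> E M (\<lambda>x. f x + g x) = E M f + E M g"
  by (rule Bochner_Integration.integral_add) (auto intro: integrable_measure_pmf_finite)
lemma E_diff: "finite (set_pmf M) \<Longrightarrow> E M (\<lambda>x. f x - g x) = E M f - E M g"
  by (rule Bochner_Integration.integral_diff) (auto intro: integrable_measure_pmf_finite)
lemma E_const: "E M (\<lambda>x. c) = c"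
  by simp
lemma E_cmult: "E M (\<lambda>x. c * f x) = c * E M f"
  by simp
lemma E_mono: "finite (set_pmf M) \<Longrightarrow> (\<And>x. x \<in> set_pmf M \<Longrightarrow> f x \<le> g x) \<Longrightarrow> E M f \<le> E M g"
  by (rule integral_mono_AE) (auto intro: integrable_measure_pmf_finite simp: AE_measure_pmf_iff)

lemma seq_len: "t \<in> set_pmf (seq_pmf ps) \<Longrightarrow> length t = length ps"
  by (induction ps arbitrary: t) auto

lemma seq_fin: "(\<And>p. p \<in> set ps \<Longrightarrow> finite (set_pmf p)) \<Longrightarrow> finite (set_pmf (seq_pmf ps))"
  by (induction ps) auto

lemma seq_mean:
  assumes "\<And>p. p \<in> set ps \<Longrightarrow> finite (set_pmf p)"
  shows "E (seq_pmf ps) (\<lambda>xs. sum_list (map g xs)) = sum_list (map (\<lambda>p. E p g) ps)"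
  using assms
proof (induction ps)
  case Nil thus ?case by simp
next
  case (Cons p ps)
  have fp: "finite (set_pmf p)" and fs: "finite (set_pmf (seq_pmf ps))"
    using Cons.prems by (auto intro: seq_fin)
  have "E (seq_pmf (p # ps)) (\<lambda>xs. sum_list (map g xs))
      = E p (\<lambda>x. E (seq_pmf ps) (\<lambda>xs. g x + sum_list (map g xs)))"
    by (simp add: E_bind fp fs)
  also have "\<dots> = E p (\<lambda>x. g x + sum_list (map (\<lambda>p. E p g) ps))"
    using Cons by (simp add: E_add fs)
  also have "\<dots> = E p g + sum_list (map (\<lambda>p. E p g) ps)"
    by (simp add: E_add fp)
  finally show ?case by simp
qed

lemma seq_var:
  assumes "\<And>p. p \<in> set ps \<Longrightarrow> finite (set_pmf p)"
  shows "E (seq_pmf ps) (\<lambda>xs. (sum_list (map g xs) - sum_list (map (\<lambda>p. E p g) ps))^2)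
     = sum_list (map (\<lambda>p. E p (\<lambda>x. (g x - E p g)^2)) ps)"
  using assms
proof (induction ps)
  case Nil thus ?case by simp
next
  case (Cons p ps)
  have fp: "finite (set_pmf p)" and fs: "finite (set_pmf (seq_pmf ps))"
    using Cons.prems by (auto intro: seq_fin)
  define \<mu> where "\<mu> = E p g"
  define \<nu> where "\<nu> = sum_list (map (\<lambda>p. E p g) ps)"
  define V where "V = sum_list (map (\<lambda>p. E p (\<lambda>x. (g x - E p g)^2)) ps)"
  have m0: "E (seq_pmf ps) (\<lambda>xs. sum_list (map g xs) - \<nu>) = 0"
    using seq_mean[of ps g] Cons.prems by (simp add: E_diff fs \<nu>_def)
  have IH: "E (seq_pmf ps) (\<lambda>xs. (sum_list (map g xs) - \<nu>)^2) = V"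
    using Cons by (simp add: \<nu>_def V_def)
  have inner: "E (seq_pmf ps) (\<lambda>xs. ((g x - \<mu>) + (sum_list (map g xs) - \<nu>))^2)
      = (g x - \<mu>)^2 + V" for x
  proof -
    have "E (seq_pmf ps) (\<lambda>xs. ((g x - \<mu>) + (sum_list (map g xs) - \<nu>))^2)
      = E (seq_pmf ps) (\<lambda>xs. (g x - \<mu>)^2 + (2 * (g x - \<mu>) * (sum_list (map g xs) - \<nu>)
            + (sum_list (map g xs) - \<nu>)^2))"
      by (simp add: power2_eq_square algebra_simps)
    also have "\<dots> = (g x - \<mu>)^2 + (2 * (g x - \<mu>) * E (seq_pmf ps) (\<lambda>xs. sum_list (map g xs) - \<nu>) + V)"
      by (simp add: E_add fs IH)
    finally show ?thesis using m0 by simp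
  qed
  have "E (seq_pmf (p # ps)) (\<lambda>xs. (sum_list (map g xs) - sum_list (map (\<lambda>p. E p g) (p # ps)))^2)
      = E p (\<lambda>x. E (seq_pmf ps) (\<lambda>xs. ((g x - \<mu>) + (sum_list (map g xs) - \<nu>))^2))"
    by (simp add: E_bind fp fs \<mu>_def \<nu>_def algebra_simps)
  also have "\<dots> = E p (\<lambda>x. (g x - \<mu>)^2 + V)"
    by (simp add: inner)
  also have "\<dots> = E p (\<lambda>x. (g x - \<mu>)^2) + V"
    by (simp add: E_add fp)
  finally show ?case by (simp add: \<mu>_def V_def)
qed



definition cl :: "real \<Rightarrow> real" where "cl x = min 1 (max 0 x)"

lemma bern_cl: "bernoulli_pmf p = bernoulli_pmf (cl p)"
  by (rule pmf_eqI) (simp add: bernoulli_pmf.rep_eq cl_def)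

lemma cl_ge0: "0 \<le> cl x" and cl_le1: "cl x \<le> 1" unfolding cl_def by auto
lemma cl_mono: "x \<le> y \<Longrightarrow> cl x \<le> cl y" unfolding cl_def by auto
lemma cl_le: "0 \<le> x \<Longrightarrow> cl x \<le> x" unfolding cl_def by auto
lemma cl_id: "0 \<le> x \<Longrightarrow> x \<le> 1 \<Longrightarrow> cl x = x" unfolding cl_def by auto

lemma E_bern_map: "E (map_pmf f (bernoulli_pmf p)) h = h (f True) * cl p + h (f False) * (1 - cl p)"
  by (subst bern_cl) (simp add: cl_ge0 cl_le1)

lemma num_score_sum: "real (num_score j t) = sum_list (map (\<lambda>x. if x = j then 1 else 0) t)"
  unfolding num_score_def by (induction t) auto

lemma sum_list_if: "sum_list (map (\<lambda>x. if x = j then (c::real) else 0) t) = c * real (num_score j t)"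
  unfolding num_score_def by (induction t) (auto simp: algebra_simps)

lemma num_score_app: "num_score j (s @ replicate k 1) = num_score j s + (if j = 1 then k else 0)"
  unfolding num_score_def by (induction k) auto



locale paa =
  fixes lam :: real and k l :: nat
  assumes lam_pos: "lam > 0" and k_pos: "k \<ge> 1"
begin

definition D :: "nat \<Rightarrow> real" where "D n = real (l + (n + 1) * k) + real n * lam"
definition q :: "nat \<Rightarrow> nat \<Rightarrow> real" where "q n j = cl (lam * real j / D n)"
definition m :: "nat \<Rightarrow> nat \<Rightarrow> nat list \<Rightarrow> real" where
  "m n j s = (real (num_score j s) + (if j = 1 then real k else 0)) * (1 - q n j)
           + (real (num_score (j - 1) s) + (if j = 2 then real k else 0)) * q n (j - 1)"

abbreviation S where "S n \<equiv> paa_state lam k l n"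
abbreviation P where "P n s \<equiv> paa_step lam k l n s"

lemma D_pos: "D n > 0"
proof -
  have "l + (n + 1) * k \<ge> 1" using k_pos by simp
  hence "real (l + (n + 1) * k) \<ge> 1" by (metis of_nat_1 of_nat_le_iff)
  thus ?thesis unfolding D_def using lam_pos by (simp add: add_pos_nonneg)
qed

lemma q0: "q n 0 = 0" unfolding q_def cl_def by simp
lemma q_ge0: "0 \<le> q n j" and q_le1: "q n j \<le> 1" unfolding q_def by (auto simp: cl_ge0 cl_le1)
lemma q_mono: "j \<le> j' \<Longrightarrow> q n j \<le> q n j'"
  unfolding q_def using D_pos[of n] lam_pos
  by (intro cl_mono divide_right_mono mult_left_mono) auto
lemma q_le: "q n j \<le> lam * real j / D n"
  unfolding q_def using D_pos[of n] lam_pos by (intro cl_le) auto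

lemma P_unfold: "P n s = seq_pmf (map (\<lambda>sc. map_pmf (\<lambda>b. if b then sc + 1 else sc)
      (bernoulli_pmf (lam * real sc / D n))) (s @ replicate k 1))"
  unfolding paa_step_def D_def Let_def by simp

lemma P_fin: "finite (set_pmf (P n s))"
  unfolding P_unfold by (rule seq_fin) auto

lemma P_len: "t \<in> set_pmf (P n s) \<Longrightarrow> length t = length s + k"
  unfolding P_unfold by (drule seq_len) simp

lemma S_fin: "finite (set_pmf (S n))"
  by (induction n) (auto simp: P_fin)

lemma S_len: "s \<in> set_pmf (S n) \<Longrightarrow> length s = l + n * k"
  by (induction n arbitrary: s) (auto dest: P_len)

lemma P_mean:
  assumes "j \<ge> 1"
  shows "E (P n s) (\<lambda>t. real (num_score j t)) = m n j s"
proof -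
  let ?g = "\<lambda>x. if x = j then 1 else (0::real)"
  let ?s' = "s @ replicate k 1"
  have "E (P n s) (\<lambda>t. real (num_score j t)) = E (P n s) (\<lambda>t. sum_list (map ?g t))"
    by (simp add: num_score_sum)
  also have "\<dots> = sum_list (map (\<lambda>sc. ?g (sc + 1) * q n sc + ?g sc * (1 - q n sc)) ?s')"
    unfolding P_unfold
    apply (subst seq_mean, force)
    apply (simp only: map_map o_def E_bern_map)
    apply (simp only: q_def[symmetric])
    apply simp
    done
  also have "\<dots> = sum_list (map (\<lambda>sc. (if sc = j - 1 then q n (j - 1) else 0)
                      + (if sc = j then 1 - q n j else 0)) ?s')"
    using assms by (intro arg_cong[where f=sum_list] map_cong) auto
  also have "\<dots> = q n (j - 1) * real (num_score (j - 1) ?s') + (1 - q n j) * real (num_score j ?s')"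
    by (simp only: sum_list_addf sum_list_if)
  also have "\<dots> = m n j s"
    unfolding m_def num_score_app using assms by (auto simp: algebra_simps)
  finally show ?thesis .
qed

lemma P_var:
  assumes "j \<ge> 1" "length s = l + n * k"
  shows "E (P n s) (\<lambda>t. (real (num_score j t) - m n j s)^2) \<le> lam * real j"
proof -
  let ?g = "\<lambda>x. if x = j then 1 else (0::real)"
  let ?s' = "s @ replicate k 1"
  let ?Q = "\<lambda>sc. map_pmf (\<lambda>b. if b then sc + 1 else sc) (bernoulli_pmf (lam * real sc / D n))"
  have mm: "m n j s = sum_list (map (\<lambda>p. E p ?g) (map ?Q ?s'))"
    using P_mean[OF assms(1), of n s] unfolding P_unfold num_score_sum
    by (subst (asm) seq_mean) auto
  have "E (P n s) (\<lambda>t. (real (num_score j t) - m n j s)^2)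
      = E (P n s) (\<lambda>t. (sum_list (map ?g t) - sum_list (map (\<lambda>p. E p ?g) (map ?Q ?s')))^2)"
    by (simp only: num_score_sum mm)
  also have "\<dots> = sum_list (map (\<lambda>p. E p (\<lambda>x. (?g x - E p ?g)^2)) (map ?Q ?s'))"
    unfolding P_unfold by (rule seq_var) auto
  also have "\<dots> = sum_list (map (\<lambda>sc. E (?Q sc) (\<lambda>x. (?g x - E (?Q sc) ?g)^2)) ?s')"
    by (simp only: map_map o_def)
  also have "\<dots> \<le> sum_list (map (\<lambda>_. lam * real j / D n) ?s')"
  proof (rule sum_list_mono)
    fix sc assume "sc \<in> set ?s'"
    define c where "c = q n sc"
    have c01: "0 \<le> c" "c \<le> 1" unfolding c_def using q_ge0 q_le1 by auto
    have ev: "E (?Q sc) (\<lambda>x. (?g x - E (?Q sc) ?g)^2)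
       = c * (1 - c) * (?g (sc + 1) - ?g sc)^2"
      unfolding c_def q_def by (simp only: E_bern_map) (simp add: power2_eq_square algebra_simps)
    show "E (?Q sc) (\<lambda>x. (?g x - E (?Q sc) ?g)^2) \<le> lam * real j / D n"
    proof (cases "sc = j \<or> sc + 1 = j")
      case True
      hence "c \<le> lam * real j / D n"
        unfolding c_def using q_le[of n sc] q_mono[of sc j n] q_le[of n j] by auto
      moreover have "c * (1 - c) * (?g (sc + 1) - ?g sc)^2 \<le> c"
      proof -
        have "c * (1 - c) \<le> c" using c01 by (simp add: mult_left_le)
        thus ?thesis using True by auto
      qed
      ultimately show ?thesis using ev by simp
    next
      case False
      thus ?thesis using ev lam_pos D_pos[of n] by auto
    qed
  qed
  also have "\<dots> = real (length ?s') * (lam * real j / D n)"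
    by (simp only: sum_list_triv)
  also have "\<dots> \<le> lam * real j"
  proof -
    have "real (length ?s') \<le> D n" using assms(2) lam_pos unfolding D_def by (simp add: algebra_simps)
    hence "real (length ?s') / D n \<le> 1" using D_pos by simp
    hence "real (length ?s') / D n * (lam * real j) \<le> lam * real j"
      using lam_pos D_pos[of n] by (intro mult_left_le_one_le) auto
    thus ?thesis by simp
  qed
  finally show ?thesis .
qed

end


lemma E_lin: "finite (set_pmf M) \<Longrightarrow> E M (\<lambda>s. a * f s + b * g s + c) = a * E M f + b * E M g + c"
  by (simp add: E_add)

lemma cs_ineq:
  fixes a b x y :: real
  assumes "0 \<le> a" "0 \<le> b" "a + b \<le> 1"
  shows "(a * x + b * y)^2 \<le> a * x^2 + b * y^2"
proof -
  have "(a + b) * (a * x^2 + b * y^2) - (a * x + b * y)^2 = a * b * (x - y)^2"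
    by (simp add: power2_eq_square algebra_simps)
  moreover have "a * b * (x - y)^2 \<ge> 0" using assms by simp
  moreover have "(a + b) * (a * x^2 + b * y^2) \<le> a * x^2 + b * y^2"
    using assms by (intro mult_left_le_one_le) auto
  ultimately show ?thesis by linarith
qed

lemma telesc:
  fixes Q a :: "nat \<Rightarrow> real"
  assumes "Q 0 = 0"
  shows "(\<Sum>j\<in>{1..i}. (1 - Q j) * a j + Q (j - 1) * a (j - 1)) = (\<Sum>j\<in>{1..i}. a j) - Q i * a i"
proof (induction i)
  case 0 thus ?case using assms by simp
next
  case (Suc i)
  show ?case
  proof (cases "i = 0")
    case True thus ?thesis using assms by (simp add: algebra_simps)
  next
    case False
    have "{1..Suc i} = insert (Suc i) {1..i}" by auto
    thus ?thesis using Suc by (simp add: algebra_simps)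
  qed
qed

context paa
begin

definition e :: "nat \<Rightarrow> nat \<Rightarrow> real" where "e n j = E (S n) (\<lambda>s. real (num_score j s))"
definition A :: "nat \<Rightarrow> nat \<Rightarrow> real" where "A n j = E (S n) (\<lambda>s. (real (num_score j s) - e n j)^2)"
definition V :: "nat \<Rightarrow> nat \<Rightarrow> real" where "V i n = (\<Sum>j\<in>{1..i}. A n j)"

lemma S_Suc_E: "E (S (Suc n)) h = E (S n) (\<lambda>s. E (P n s) h)"
  by (simp add: E_bind S_fin P_fin)

lemma m_lin: "m n j s = (1 - q n j) * real (num_score j s) + q n (j - 1) * real (num_score (j - 1) s)
   + ((if j = 1 then real k else 0) * (1 - q n j) + (if j = 2 then real k else 0) * q n (j - 1))"
  unfolding m_def by (simp add: algebra_simps)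

lemma rec_e:
  assumes "j \<ge> 1"
  shows "e (Suc n) j = (e n j + (if j = 1 then real k else 0)) * (1 - q n j)
     + (e n (j - 1) + (if j = 2 then real k else 0)) * q n (j - 1)"
proof -
  have "e (Suc n) j = E (S n) (m n j)"
    unfolding e_def S_Suc_E using P_mean[OF assms] by simp
  also have "\<dots> = (1 - q n j) * e n j + q n (j - 1) * e n (j - 1)
      + ((if j = 1 then real k else 0) * (1 - q n j) + (if j = 2 then real k else 0) * q n (j - 1))"
    unfolding m_lin e_def by (rule E_lin[OF S_fin])
  finally show ?thesis by (simp add: algebra_simps)
qed

lemma A_nonneg: "A n j \<ge> 0"
  unfolding A_def by (rule integral_nonneg_AE) auto

lemma A_step:
  assumes "j \<ge> 1"
  shows "A (Suc n) j \<le> lam * real j + (1 - q n j) * A n j + q n (j - 1) * A n (j - 1)"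
proof -
  let ?c = "e (Suc n) j"
  let ?X = "\<lambda>j s. real (num_score j s) - e n j"
  have inner: "E (P n s) (\<lambda>t. (real (num_score j t) - ?c)^2)
       \<le> lam * real j + ((1 - q n j) * (?X j s)^2 + q n (j - 1) * (?X (j - 1) s)^2)"
    if s: "s \<in> set_pmf (S n)" for s
  proof -
    let ?m = "m n j s"
    have m0: "E (P n s) (\<lambda>t. real (num_score j t) - ?m) = 0"
      using P_mean[OF assms] by (simp add: E_diff P_fin)
    have "E (P n s) (\<lambda>t. (real (num_score j t) - ?c)^2)
       = E (P n s) (\<lambda>t. (real (num_score j t) - ?m)^2 + (2 * (?m - ?c)) * (real (num_score j t) - ?m)
             + (?m - ?c)^2)"
      by (simp add: power2_eq_square algebra_simps)
    also have "\<dots> = E (P n s) (\<lambda>t. (real (num_score j t) - ?m)^2) + (?m - ?c)^2"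
      using m0 by (simp add: E_add P_fin)
    also have "\<dots> \<le> lam * real j + (?m - ?c)^2"
      using P_var[OF assms S_len[OF s]] by simp
    also have "?m - ?c = (1 - q n j) * ?X j s + q n (j - 1) * ?X (j - 1) s"
      unfolding m_def rec_e[OF assms] by (simp add: algebra_simps)
    also have "((1 - q n j) * ?X j s + q n (j - 1) * ?X (j - 1) s)^2
        \<le> (1 - q n j) * (?X j s)^2 + q n (j - 1) * (?X (j - 1) s)^2"
      using q_le1[of n j] q_ge0[of n "j - 1"] q_mono[of "j - 1" j n] by (intro cs_ineq) auto
    finally show ?thesis by simp
  qed
  have "A (Suc n) j = E (S n) (\<lambda>s. E (P n s) (\<lambda>t. (real (num_score j t) - ?c)^2))"
    unfolding A_def S_Suc_E ..
  also have "\<dots> \<le> E (S n) (\<lambda>s. (1 - q n j) * (?X j s)^2 + q n (j - 1) * (?X (j - 1) s)^2 + lam * real j)"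
    using inner by (intro E_mono[OF S_fin]) (simp add: algebra_simps)
  also have "\<dots> = (1 - q n j) * A n j + q n (j - 1) * A n (j - 1) + lam * real j"
    unfolding A_def by (rule E_lin[OF S_fin])
  finally show ?thesis by simp
qed

lemma V_step: "V i (Suc n) \<le> V i n + real i * (lam * real i)"
proof -
  have "V i (Suc n) \<le> (\<Sum>j\<in>{1..i}. lam * real j + ((1 - q n j) * A n j + q n (j - 1) * A n (j - 1)))"
    unfolding V_def using A_step by (intro sum_mono) (simp add: algebra_simps)
  also have "\<dots> = (\<Sum>j\<in>{1..i}. lam * real j) + (V i n - q n i * A n i)"
    unfolding V_def using telesc[of "q n" "A n" i] by (simp add: q0 sum.distrib)
  finally have 1: "V i (Suc n) \<le> (\<Sum>j\<in>{1..i}. lam * real j) + (V i n - q n i * A n i)" .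
  have "(\<Sum>j\<in>{1..i}. lam * real j) \<le> (\<Sum>j\<in>{1..i}. lam * real i)"
    using lam_pos by (intro sum_mono) auto
  also have "\<dots> = real i * (lam * real i)" by simp
  finally have 2: "(\<Sum>j\<in>{1..i}. lam * real j) \<le> real i * (lam * real i)" .
  from 1 2 have "V i (Suc n) \<le> real i * (lam * real i) + (V i n - q n i * A n i)" by linarith
  moreover have "q n i * A n i \<ge> 0" using q_ge0[of n i] A_nonneg[of n i] by simp
  ultimately show ?thesis by linarith
qed

lemma V0: "V i 0 = 0"
  unfolding V_def A_def e_def by simp

lemma V_bound: "V i n \<le> real n * (real i * (lam * real i))"
proof (induction n)
  case 0 thus ?case by (simp add: V0)
next
  case (Suc n) thus ?case using V_step[of i n] by (simp add: algebra_simps)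
qed

lemma cheb:
  assumes "\<delta> > 0" "i \<ge> 1"
  shows "measure_pmf.prob (S n) {s. \<delta> \<le> \<bar>real (num_score i s) - e n i\<bar>} \<le> V i n / \<delta>^2"
proof -
  have "measure_pmf.prob (S n) {s \<in> space (measure_pmf (S n)). \<delta> \<le> \<bar>real (num_score i s) - E (S n) (\<lambda>s. real (num_score i s))\<bar>}
        \<le> measure_pmf.variance (S n) (\<lambda>s. real (num_score i s)) / \<delta>^2"
    by (rule measure_pmf.Chebyshev_inequality) (auto intro: integrable_measure_pmf_finite S_fin assms)
  moreover have "measure_pmf.variance (S n) (\<lambda>s. real (num_score i s)) = A n i"
    unfolding A_def e_def ..
  moreover have "A n i \<le> V i n"
    unfolding V_def using assms A_nonneg by (intro member_le_sum) auto
  ultimately show ?thesis using assms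
    by (simp add: e_def) (meson divide_right_mono order_trans zero_le_power2)
qed

end


lemma lemA:
  fixes u c \<epsilon> :: "nat \<Rightarrow> real"
  assumes ev: "eventually (\<lambda>n. u (Suc n) = c n * u n + \<epsilon> n \<and> \<bar>c n\<bar> \<le> 1) sequentially"
    and eps: "\<epsilon> \<longlonglongrightarrow> 0"
  shows "(\<lambda>n. u n / real n) \<longlonglongrightarrow> 0"
proof (rule LIMSEQ_I)
  fix r :: real assume r: "0 < r"
  have h: "\<forall>e>0. eventually (\<lambda>x. \<bar>\<epsilon> x\<bar> < e) sequentially"
    using eps by (simp add: tendsto_iff dist_real_def)
  have "eventually (\<lambda>n. \<bar>\<epsilon> n\<bar> < r / 2) sequentially"
    using r h half_gt_zero by blast
  with ev have "eventually (\<lambda>n. (u (Suc n) = c n * u n + \<epsilon> n \<and> \<bar>c n\<bar> \<le> 1) \<and> \<bar>\<epsilon> n\<bar> < r / 2) sequentially"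
    by (rule eventually_conj)
  then obtain N where N: "\<And>n. n \<ge> N \<Longrightarrow> u (Suc n) = c n * u n + \<epsilon> n \<and> \<bar>c n\<bar> \<le> 1 \<and> \<bar>\<epsilon> n\<bar> < r / 2"
    unfolding eventually_sequentially by blast
  have bnd: "\<bar>u n\<bar> \<le> \<bar>u N\<bar> + (real n - real N) * (r / 2)" if "n \<ge> N" for n
    using that
  proof (induction n rule: dec_induct)
    case base thus ?case by simp
  next
    case (step n)
    from N[OF step.hyps(1)] have rec: "u (Suc n) = c n * u n + \<epsilon> n" and c: "\<bar>c n\<bar> \<le> 1"
      and e: "\<bar>\<epsilon> n\<bar> < r / 2" by auto
    have "\<bar>c n * u n\<bar> \<le> \<bar>u n\<bar>" using c by (simp add: abs_mult mult_left_le_one_le)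
    hence "\<bar>u (Suc n)\<bar> \<le> \<bar>u n\<bar> + r / 2" using rec e by linarith
    moreover have "real (Suc n) - real N = (real n - real N) + 1" by simp
    hence "(real (Suc n) - real N) * (r/2) = (real n - real N) * (r/2) + r/2"
      by (simp only: distrib_right mult_1_left)
    ultimately show ?case using step.IH by linarith
  qed
  define M where "M = max (Suc N) (nat \<lceil>2 * \<bar>u N\<bar> / r\<rceil> + 1)"
  show "\<exists>no. \<forall>n\<ge>no. norm (u n / real n - 0) < r"
  proof (intro exI allI impI)
    fix n assume n: "M \<le> n"
    hence nN: "n \<ge> N" and npos: "real n > 0" unfolding M_def by auto
    have "real n > 2 * \<bar>u N\<bar> / r"
    proof -
      have "real n \<ge> real (nat \<lceil>2 * \<bar>u N\<bar> / r\<rceil> + 1)" using n unfolding M_def by simp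
      moreover have "real (nat \<lceil>2 * \<bar>u N\<bar> / r\<rceil>) \<ge> 2 * \<bar>u N\<bar> / r" by linarith
      ultimately show ?thesis by simp
    qed
    hence 1: "\<bar>u N\<bar> < real n * (r / 2)" using r by (simp add: field_simps)
    have h: "(real n - real N) * (r / 2) \<le> real n * (r / 2)" using r by (intro mult_right_mono) auto
    have "\<bar>u n\<bar> < real n * (r / 2) + real n * (r / 2)" using bnd[OF nN] 1 h by linarith
    moreover have "real n * (r / 2) + real n * (r / 2) = real n * r"
      by (metis distrib_left field_sum_of_halves)
    ultimately have "\<bar>u n\<bar> < real n * r" by linarith
    hence "\<bar>u n\<bar> / real n < r" by (subst pos_divide_less_eq[OF npos]) (simp only: mult.commute)
    moreover have "norm (u n / real n - 0) = \<bar>u n\<bar> / real n" using npos by simp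
    ultimately show "norm (u n / real n - 0) < r" by simp
  qed
qed

lemma lemB:
  fixes a b :: "nat \<Rightarrow> real"
  assumes th: "\<theta> \<ge> 0" and dl: "\<delta> > 0"
    and ev: "eventually (\<lambda>n. a (Suc n) = (1 - \<theta> / (real n + \<delta>)) * a n + b n) sequentially"
    and b: "b \<longlonglongrightarrow> \<beta>"
  shows "(\<lambda>n. a n / real n) \<longlonglongrightarrow> \<beta> / (1 + \<theta>)"
proof -
  define L where "L = \<beta> / (1 + \<theta>)"
  have L: "L * (1 + \<theta>) = \<beta>" unfolding L_def using th by simp
  define u where "u n = a n - L * (real n + \<delta>)" for n
  have ev2: "eventually (\<lambda>n. real n \<ge> \<theta>) sequentially"
    by (rule eventually_sequentiallyI[of "nat \<lceil>\<theta>\<rceil>"]) linarith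
  have "eventually (\<lambda>n. u (Suc n) = (1 - \<theta> / (real n + \<delta>)) * u n + (b n - \<beta>)
         \<and> \<bar>1 - \<theta> / (real n + \<delta>)\<bar> \<le> 1) sequentially"
    using ev ev2
  proof eventually_elim
    case (elim n)
    have pos: "real n + \<delta> > 0" using dl by simp
    define x where "x = \<theta> / (real n + \<delta>)"
    have kx: "x * (L * (real n + \<delta>)) = L * \<theta>" unfolding x_def using pos by simp
    have id: "(1 - x) * (a n - L * (real n + \<delta>)) + (b n - L * (1 + \<theta>))
       = ((1 - x) * a n + b n) - L * (real n + \<delta>) - L + (x * (L * (real n + \<delta>)) - L * \<theta>)"
      by (simp add: algebra_simps)
    have "u (Suc n) = (1 - x) * u n + (b n - \<beta>)"
      using elim(1)[folded x_def] unfolding u_def L[symmetric] id kx by (simp add: algebra_simps)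
    hence "u (Suc n) = (1 - \<theta> / (real n + \<delta>)) * u n + (b n - \<beta>)" by (simp add: x_def)
    moreover have "\<theta> / (real n + \<delta>) \<le> 1" using elim(2) pos dl by simp
    moreover have "\<theta> / (real n + \<delta>) \<ge> 0" using th pos by simp
    ultimately show ?case by simp
  qed
  moreover have "(\<lambda>n. b n - \<beta>) \<longlonglongrightarrow> 0" using b by (simp add: LIM_zero)
  ultimately have u0: "(\<lambda>n. u n / real n) \<longlonglongrightarrow> 0" by (rule lemA)
  have d0: "(\<lambda>n. \<delta> / real n) \<longlonglongrightarrow> 0" by (rule lim_const_over_n)
  have "(\<lambda>n. u n / real n + L * (1 + \<delta> / real n)) \<longlonglongrightarrow> 0 + L * (1 + 0)"
    by (intro tendsto_intros u0 d0)
  moreover have "eventually (\<lambda>n. u n / real n + L * (1 + \<delta> / real n) = a n / real n) sequentially"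
    by (rule eventually_sequentiallyI[of 1]) (simp add: u_def field_simps)
  ultimately have "(\<lambda>n. a n / real n) \<longlonglongrightarrow> 0 + L * (1 + 0)"
    by (rule Lim_transform_eventually)
  thus ?thesis by (simp add: L_def)
qed



lemma Gamma_p1: "(x::real) > 0 \<Longrightarrow> Gamma (x + 1) = x * Gamma x"
  by (rule Gamma_plus1) (auto dest: nonpos_Ints_nonpos)

lemma paa_limit_1:
  assumes "lam > 0"
  shows "paa_limit lam k 1 = (1 + real k / lam) / (2 + real k / lam)"
proof -
  define \<alpha> where "\<alpha> = real k / lam"
  have a: "\<alpha> \<ge> 0" unfolding \<alpha>_def using assms by simp
  have "Gamma (2 + \<alpha> + 1) = (2 + \<alpha>) * Gamma (2 + \<alpha>)" using a by (intro Gamma_p1) simp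
  moreover have "Gamma (2 + \<alpha>) > 0" using a by simp
  ultimately show ?thesis unfolding paa_limit_def Let_def \<alpha>_def[symmetric] by simp
qed

lemma paa_limit_Suc:
  assumes "lam > 0" "j \<ge> 1"
  shows "paa_limit lam k (Suc j) = paa_limit lam k j * real j / (2 + real k / lam + real j)"
proof -
  define \<alpha> where "\<alpha> = real k / lam"
  have a: "\<alpha> \<ge> 0" unfolding \<alpha>_def using assms by simp
  have g1: "Gamma (real (Suc j)) = real j * Gamma (real j)"
    using Gamma_p1[of "real j"] assms by (simp add: add.commute)
  have g2: "Gamma (2 + \<alpha> + real (Suc j)) = (2 + \<alpha> + real j) * Gamma (2 + \<alpha> + real j)"
    using Gamma_p1[of "2 + \<alpha> + real j"] a by (simp add: add.assoc)
  have p: "Gamma (2 + \<alpha> + real j) > 0" using a by simp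
  have p2: "2 + \<alpha> + real j > 0" using a by simp
  show ?thesis unfolding paa_limit_def Let_def \<alpha>_def[symmetric] g1 g2
    using p p2 by (simp add: field_simps)
qed

context paa
begin

definition th :: "nat \<Rightarrow> real" where "th j = lam * real j / (real k + lam)"
definition dl :: real where "dl = (real l + real k) / (real k + lam)"

lemma kl_pos: "real k + lam > 0" using lam_pos by simp
lemma dl_pos: "dl > 0" unfolding dl_def using k_pos lam_pos by (simp add: add_pos_nonneg)
lemma th_ge0: "th j \<ge> 0" unfolding th_def using lam_pos by simp

lemma D_eq: "D n = (real k + lam) * (real n + dl)"
  unfolding D_def dl_def using kl_pos by (simp add: field_simps)

lemma q_eq: assumes "n \<ge> j" shows "q n j = th j / (real n + dl)"
proof -
  have "lam * real j \<le> lam * real n" using assms lam_pos by simp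
  also have "\<dots> \<le> D n" unfolding D_def by simp
  finally have "lam * real j / D n \<le> 1" using D_pos[of n] by simp
  hence "q n j = lam * real j / D n" unfolding q_def using lam_pos D_pos[of n] by (intro cl_id) auto
  thus ?thesis unfolding D_eq th_def using kl_pos by (simp add: field_simps)
qed

lemma q_lim: "(\<lambda>n. q n j) \<longlonglongrightarrow> 0"
proof -
  have "(\<lambda>n. (th j / real n) / (1 + dl / real n)) \<longlonglongrightarrow> 0 / (1 + 0)"
    by (intro tendsto_intros) auto
  moreover have "eventually (\<lambda>n. (th j / real n) / (1 + dl / real n) = q n j) sequentially"
  proof (rule eventually_sequentiallyI[of "Suc j"])
    fix n assume n: "Suc j \<le> n"
    hence "real n > 0" by simp
    thus "(th j / real n) / (1 + dl / real n) = q n j"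
      using q_eq[of j n] n dl_pos by (simp add: field_simps)
  qed
  ultimately show ?thesis by (simp add: Lim_transform_eventually)
qed

lemma nq_lim: "(\<lambda>n. real n * q n j) \<longlonglongrightarrow> th j"
proof -
  have "(\<lambda>n. th j / (1 + dl / real n)) \<longlonglongrightarrow> th j / (1 + 0)"
    by (intro tendsto_intros) auto
  moreover have "eventually (\<lambda>n. th j / (1 + dl / real n) = real n * q n j) sequentially"
  proof (rule eventually_sequentiallyI[of "Suc j"])
    fix n assume n: "Suc j \<le> n"
    hence "real n > 0" by simp
    thus "th j / (1 + dl / real n) = real n * q n j"
      using q_eq[of j n] n dl_pos by (simp add: field_simps)
  qed
  ultimately show ?thesis by (simp add: Lim_transform_eventually)
qed

lemma e_lim:
  assumes "j \<ge> 1"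
  shows "(\<lambda>n. e n j / real n) \<longlonglongrightarrow> real k * paa_limit lam k j"
  using assms
proof (induction j rule: nat_induct_at_least)
  case base
  have ev: "eventually (\<lambda>n. e (Suc n) 1 = (1 - th 1 / (real n + dl)) * e n 1 + real k * (1 - q n 1)) sequentially"
  proof (rule eventually_sequentiallyI[of 1])
    fix n :: nat assume "1 \<le> n"
    thus "e (Suc n) 1 = (1 - th 1 / (real n + dl)) * e n 1 + real k * (1 - q n 1)"
      using rec_e[of 1 n] q_eq[of 1 n] by (simp add: q0 algebra_simps)
  qed
  have b: "(\<lambda>n. real k * (1 - q n 1)) \<longlonglongrightarrow> real k * (1 - 0)"
    by (intro tendsto_intros q_lim)
  have "(\<lambda>n. e n 1 / real n) \<longlonglongrightarrow> real k * (1 - 0) / (1 + th 1)"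
    by (rule lemB[OF th_ge0 dl_pos ev b])
  moreover have "real k * (1 - 0) / (1 + th 1) = real k * paa_limit lam k 1"
  proof -
    have p: "real k + 2 * lam > 0" using lam_pos by simp
    have 1: "1 + th 1 = (real k + 2 * lam) / (real k + lam)"
      unfolding th_def using kl_pos by (simp add: field_simps)
    have 2: "1 + real k / lam = (real k + lam) / lam" "2 + real k / lam = (real k + 2 * lam) / lam"
      using lam_pos by (simp_all add: field_simps)
    show ?thesis unfolding paa_limit_1[OF lam_pos] 1 2 using p kl_pos lam_pos by simp
  qed
  ultimately show ?case by simp
next
  case (Suc j)
  define c where "c = (if Suc j = 2 then real k else 0)"
  have ev: "eventually (\<lambda>n. e (Suc n) (Suc j) = (1 - th (Suc j) / (real n + dl)) * e n (Suc j)
       + ((e n j / real n) * (real n * q n j) + c * q n j)) sequentially"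
  proof (rule eventually_sequentiallyI[of "Suc j"])
    fix n :: nat assume n: "Suc j \<le> n"
    hence "real n > 0" by simp
    thus "e (Suc n) (Suc j) = (1 - th (Suc j) / (real n + dl)) * e n (Suc j)
       + ((e n j / real n) * (real n * q n j) + c * q n j)"
      using rec_e[of "Suc j" n] q_eq[of "Suc j" n] n Suc.hyps unfolding c_def
      by (simp add: algebra_simps)
  qed
  have b: "(\<lambda>n. (e n j / real n) * (real n * q n j) + c * q n j)
      \<longlonglongrightarrow> real k * paa_limit lam k j * th j + c * 0"
    by (intro tendsto_intros Suc.IH nq_lim q_lim)
  have "(\<lambda>n. e n (Suc j) / real n) \<longlonglongrightarrow> (real k * paa_limit lam k j * th j + c * 0) / (1 + th (Suc j))"
    by (rule lemB[OF th_ge0 dl_pos ev b])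
  moreover have "(real k * paa_limit lam k j * th j + c * 0) / (1 + th (Suc j)) = real k * paa_limit lam k (Suc j)"
  proof -
    define X where "X = real k * paa_limit lam k j"
    define Z where "Z = real k + 2 * lam + lam * real j"
    have Zp: "Z > 0" unfolding Z_def using lam_pos by (simp add: add_pos_nonneg)
    have 1: "1 + th (Suc j) = Z / (real k + lam)"
      unfolding th_def Z_def using kl_pos by (simp add: field_simps)
    have 2: "2 + real k / lam + real j = Z / lam"
      unfolding Z_def using lam_pos by (simp add: field_simps)
    have t: "th j * (real k + lam) = lam * real j" unfolding th_def using kl_pos by simp
    have "(X * th j + c * 0) / (1 + th (Suc j)) = X * (th j * (real k + lam)) / Z"
      unfolding 1 using kl_pos Zp by simp
    also have "\<dots> = X * (lam * real j) / Z" unfolding t ..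
    also have "\<dots> = real k * (paa_limit lam k j * real j / (Z / lam))"
      unfolding X_def using lam_pos Zp by (simp add: field_simps)
    finally show ?thesis unfolding paa_limit_Suc[OF lam_pos Suc.hyps] 2 X_def by simp
  qed
  ultimately show ?case by simp
qed

end


lemma tri3: "(a::real) < e / 2 \<Longrightarrow> e < b \<Longrightarrow> b \<le> a + c \<Longrightarrow> c < e / 2 \<Longrightarrow> False"
  by linarith

theorem mainTheorem3:
  fixes lam :: real and k l i :: nat
  assumes "lam > 0" and "k \<ge> 1" and "lam \<le> real (k + l)" and "i \<ge> 1"
  shows "\<forall>\<epsilon>>0. (\<lambda>n. measure_pmf.prob (paa_state lam k l n)
            {s. \<bar>real (num_score i s) / (real n * real k) - paa_limit lam k i\<bar> > \<epsilon>})
          \<longlonglongrightarrow> 0"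
proof -
  interpret paa lam k l using assms by unfold_locales auto
  show ?thesis
  proof (intro allI impI)
    fix \<epsilon> :: real assume ep: "\<epsilon> > 0"
    define x where "x = paa_limit lam k i"
    define C where "C = real i * (lam * real i)"
    have kp: "real k > 0" using assms by simp
    have "(\<lambda>n. e n i / real n / real k) \<longlonglongrightarrow> real k * x / real k"
      unfolding x_def by (intro tendsto_intros e_lim assms) (use kp in simp)
    hence "(\<lambda>n. e n i / (real n * real k)) \<longlonglongrightarrow> x" using kp by simp
    hence hh: "\<forall>r>0. eventually (\<lambda>n. \<bar>e n i / (real n * real k) - x\<bar> < r) sequentially"
      by (simp add: tendsto_iff dist_real_def)
    have ev1: "eventually (\<lambda>n. \<bar>e n i / (real n * real k) - x\<bar> < \<epsilon> / 2) sequentially"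
    proof -
      have "\<epsilon> / 2 > 0" using ep by simp
      thus ?thesis using hh by blast
    qed
    define h where "h n = (4 * C / (\<epsilon>^2 * (real k)^2)) / real n" for n
    have h0: "h \<longlonglongrightarrow> 0" unfolding h_def by (rule lim_const_over_n)
    have ev2: "eventually (\<lambda>n. measure_pmf.prob (S n)
            {s. \<bar>real (num_score i s) / (real n * real k) - x\<bar> > \<epsilon>} \<le> h n) sequentially"
      using ev1 eventually_gt_at_top[of 0]
    proof eventually_elim
      case (elim n)
      define \<delta> where "\<delta> = \<epsilon> * (real n * real k) / 2"
      have nk: "real n * real k > 0" using elim(2) kp by simp
      have dp: "\<delta> > 0" unfolding \<delta>_def using ep nk by simp
      have sub: "{s. \<bar>real (num_score i s) / (real n * real k) - x\<bar> > \<epsilon>}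
           \<subseteq> {s. \<delta> \<le> \<bar>real (num_score i s) - e n i\<bar>}"
      proof (rule subsetI, rule ccontr)
        fix s assume s: "s \<in> {s. \<bar>real (num_score i s) / (real n * real k) - x\<bar> > \<epsilon>}"
          and ns: "s \<notin> {s. \<delta> \<le> \<bar>real (num_score i s) - e n i\<bar>}"
        have "\<bar>real (num_score i s) - e n i\<bar> < \<delta>" using ns by simp
        moreover have "\<delta> = \<epsilon> / 2 * (real n * real k)" unfolding \<delta>_def by simp
        ultimately have "\<bar>real (num_score i s) - e n i\<bar> < \<epsilon> / 2 * (real n * real k)" by simp
        hence "\<bar>real (num_score i s) - e n i\<bar> / (real n * real k) < \<epsilon> / 2"
          by (subst pos_divide_less_eq[OF nk])
        moreover have "real (num_score i s) / (real n * real k) - e n i / (real n * real k)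
           = (real (num_score i s) - e n i) / (real n * real k)"
          by (rule diff_divide_distrib[symmetric])
        moreover have "\<bar>(real (num_score i s) - e n i) / (real n * real k)\<bar>
           = \<bar>real (num_score i s) - e n i\<bar> / (real n * real k)"
          using nk by (simp add: abs_divide)
        ultimately have "\<bar>real (num_score i s) / (real n * real k) - e n i / (real n * real k)\<bar> < \<epsilon> / 2"
          by simp
        moreover have "\<epsilon> < \<bar>real (num_score i s) / (real n * real k) - x\<bar>" using s by simp
        moreover have "\<bar>real (num_score i s) / (real n * real k) - x\<bar>
            \<le> \<bar>real (num_score i s) / (real n * real k) - e n i / (real n * real k)\<bar>
              + \<bar>e n i / (real n * real k) - x\<bar>"
          using abs_triangle_ineq[of "real (num_score i s) / (real n * real k) - e n i / (real n * real k)"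
              "e n i / (real n * real k) - x"] by simp
        ultimately show False using elim(1) by (rule tri3)
      qed
      have "measure_pmf.prob (S n) {s. \<bar>real (num_score i s) / (real n * real k) - x\<bar> > \<epsilon>}
          \<le> measure_pmf.prob (S n) {s. \<delta> \<le> \<bar>real (num_score i s) - e n i\<bar>}"
        by (rule measure_pmf.finite_measure_mono[OF sub]) simp
      also have "\<dots> \<le> V i n / \<delta>^2" by (rule cheb[OF dp assms(4)])
      also have "\<dots> \<le> real n * C / \<delta>^2"
        unfolding C_def using V_bound[of i n] dp by (intro divide_right_mono) auto
      also have "\<dots> = h n"
      proof -
        define Q where "Q = \<epsilon>^2 * (real k)^2 / 4"
        have Qp: "Q > 0" unfolding Q_def using ep kp by simp
        have np: "real n > 0" using elim(2) by simp
        have d2: "\<delta>^2 = Q * (real n * real n)"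
          unfolding \<delta>_def Q_def by (simp add: power2_eq_square algebra_simps)
        have 1: "real n * C / (Q * (real n * real n)) = (C / Q) / real n"
          using np Qp by (simp add: field_simps)
        have 2: "4 * C / (\<epsilon>^2 * (real k)^2) = C / Q"
          unfolding Q_def by simp
        show ?thesis unfolding h_def d2 1 2 ..
      qed
      finally show ?case .
    qed
    have ev0: "eventually (\<lambda>n. 0 \<le> measure_pmf.prob (S n)
            {s. \<bar>real (num_score i s) / (real n * real k) - x\<bar> > \<epsilon>}) sequentially"
      by simp
    show "(\<lambda>n. measure_pmf.prob (paa_state lam k l n)
            {s. \<bar>real (num_score i s) / (real n * real k) - paa_limit lam k i\<bar> > \<epsilon>}) \<longlonglongrightarrow> 0"
      using tendsto_sandwich[OF ev0 ev2 tendsto_const h0] unfolding x_def .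
  qed
qed


end
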